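(* In an absolute matrix order unit space $\mathbb{X},$ let $p \in \mathbb{OP}_l(\mathbb{X})$ with $p\neq 0.$ Then $\Vert p \Vert_l = 1.$
   Context: $(\mathbb{X},\{\mathbb{M}_m(\mathbb{X})^+\},\{\vert\cdot\vert_{l,m}\},e)$ is an absolute matrix order unit space with matrix norms $\Vert\cdot\Vert_l$ determined by $e$. $\mathbb{OP}_l(\mathbb{X})$ is the set of order projections in $\mathbb{M}_l(\mathbb{X})$: self-adjoint $p$ with $\vert 2p-e^l\vert_l=e^l$, where $e^l$ is the $l$-fold block-diagonal sum of $e$. *)

theory Defs
  imports "HOL-Analysis.Analysis" "HOL-Library.Function_Algebras"
begin

text \<open>An m x n matrix over 'a is a function nat => nat => 'a vanishing outside
  the index range {0..<m} x {0..<n}.  Indices start at 0.\<close>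

type_synonym 'a mtx = "nat \<Rightarrow> nat \<Rightarrow> 'a"

definition mats :: "nat \<Rightarrow> nat \<Rightarrow> ('a::zero) mtx set" where
  "mats m n = {A. \<forall>i j. (m \<le> i \<or> n \<le> j) \<longrightarrow> A i j = 0}"

definition mstar :: "('a \<Rightarrow> 'a) \<Rightarrow> 'a mtx \<Rightarrow> 'a mtx" where
  "mstar st A = (\<lambda>i j. st (A j i))"

definition cadj :: "complex mtx \<Rightarrow> complex mtx" where
  "cadj \<alpha> = (\<lambda>i j. cnj (\<alpha> j i))"

definition lmult :: "(complex \<Rightarrow> 'a \<Rightarrow> 'a) \<Rightarrow> nat \<Rightarrow> nat \<Rightarrow> nat \<Rightarrow> complex mtx \<Rightarrow> ('a::ab_group_add) mtx \<Rightarrow> 'a mtx" where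
  "lmult sm r m n \<alpha> A = (\<lambda>i j. if i < r \<and> j < n then (\<Sum>k<m. sm (\<alpha> i k) (A k j)) else 0)"

definition rmult :: "(complex \<Rightarrow> 'a \<Rightarrow> 'a) \<Rightarrow> nat \<Rightarrow> nat \<Rightarrow> nat \<Rightarrow> ('a::ab_group_add) mtx \<Rightarrow> complex mtx \<Rightarrow> 'a mtx" where
  "rmult sm m n s A \<beta> = (\<lambda>i j. if i < m \<and> j < s then (\<Sum>k<n. sm (\<beta> k j) (A i k)) else 0)"

definition cmat_norm :: "nat \<Rightarrow> nat \<Rightarrow> complex mtx \<Rightarrow> real" where
  "cmat_norm r m \<alpha> = Sup {sqrt (\<Sum>i<r. (cmod (\<Sum>k<m. \<alpha> i k * x k))\<^sup>2) | x.
                          (\<Sum>k<m. (cmod (x k))\<^sup>2) \<le> 1}"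

definition dsum :: "nat \<Rightarrow> nat \<Rightarrow> nat \<Rightarrow> nat \<Rightarrow> ('a::zero) mtx \<Rightarrow> 'a mtx \<Rightarrow> 'a mtx" where
  "dsum m n r s A B = (\<lambda>i j. if i < m \<and> j < n then A i j
       else if m \<le> i \<and> i < m + r \<and> n \<le> j \<and> j < n + s then B (i - m) (j - n) else 0)"

definition block2 :: "nat \<Rightarrow> ('a::zero) mtx \<Rightarrow> 'a mtx \<Rightarrow> 'a mtx \<Rightarrow> 'a mtx \<Rightarrow> 'a mtx" where
  "block2 n A B C D = (\<lambda>i j.
      if i < n \<and> j < n then A i j
      else if i < n \<and> n \<le> j \<and> j < 2*n then B i (j - n)
      else if n \<le> i \<and> i < 2*n \<and> j < n then C (i - n) j
      else if n \<le> i \<and> i < 2*n \<and> n \<le> j \<and> j < 2*n then D (i - n) (j - n)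
      else 0)"

definition rsc :: "(complex \<Rightarrow> 'a \<Rightarrow> 'a) \<Rightarrow> real \<Rightarrow> 'a mtx \<Rightarrow> 'a mtx" where
  "rsc sm k A = (\<lambda>i j. sm (complex_of_real k) (A i j))"

text \<open>e^n: the n-fold block diagonal sum of e.\<close>
definition ediag :: "nat \<Rightarrow> 'a::zero \<Rightarrow> 'a mtx" where
  "ediag n e = (\<lambda>i j. if i = j \<and> i < n then e else 0)"

definition msa :: "('a \<Rightarrow> 'a) \<Rightarrow> nat \<Rightarrow> ('a::zero) mtx set" where
  "msa st n = {A \<in> mats n n. mstar st A = A}"

text \<open>The space X is given by a type 'a with addition, a complex scalar multiplication
  sm, an involution st, cones P n = M_n(X)^+, absolute values absv m n = |.|_{m,n}
  and the unit e.\<close>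

definition mle :: "(nat \<Rightarrow> ('a::ab_group_add) mtx set) \<Rightarrow> nat \<Rightarrow> 'a mtx \<Rightarrow> 'a mtx \<Rightarrow> bool" where
  "mle P n A B \<longleftrightarrow> B - A \<in> P n"

text \<open>Matrix norm determined by e (Choi--Effros):
  ||v||_n = inf { k > 0 : [[k e^n, v], [v*, k e^n]] \<in> M_{2n}(X)^+ }.\<close>
definition mnorm :: "(complex \<Rightarrow> 'a \<Rightarrow> 'a) \<Rightarrow> ('a \<Rightarrow> 'a) \<Rightarrow> (nat \<Rightarrow> ('a::ab_group_add) mtx set)
    \<Rightarrow> 'a \<Rightarrow> nat \<Rightarrow> 'a mtx \<Rightarrow> real" where
  "mnorm sm st P e n v = Inf {k::real. 0 < k \<and>
      block2 n (rsc sm k (ediag n e)) v (mstar st v) (rsc sm k (ediag n e)) \<in> P (2*n)}"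

definition matrix_order_unit_space ::
  "(complex \<Rightarrow> 'a \<Rightarrow> 'a) \<Rightarrow> ('a::ab_group_add \<Rightarrow> 'a) \<Rightarrow> (nat \<Rightarrow> 'a mtx set) \<Rightarrow> 'a \<Rightarrow> bool" where
  "matrix_order_unit_space sm st P e \<longleftrightarrow>
     \<comment> \<open>X is a complex vector space\<close>
     Vector_Spaces.vector_space sm \<and>
     \<comment> \<open>* is a conjugate-linear involution\<close>
     (\<forall>x. st (st x) = x) \<and>
     (\<forall>x y. st (x + y) = st x + st y) \<and>
     (\<forall>c x. st (sm c x) = sm (cnj c) (st x)) \<and>
     \<comment> \<open>M_n(X)^+ is a proper cone of self-adjoint n x n matrices\<close>
     (\<forall>n. P n \<subseteq> msa st n) \<and>
     (\<forall>n. 0 \<in> P n) \<and>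
     (\<forall>n A B. A \<in> P n \<longrightarrow> B \<in> P n \<longrightarrow> A + B \<in> P n) \<and>
     (\<forall>n A (k::real). A \<in> P n \<longrightarrow> 0 \<le> k \<longrightarrow> rsc sm k A \<in> P n) \<and>
     (\<forall>n A. A \<in> P n \<longrightarrow> - A \<in> P n \<longrightarrow> A = 0) \<and>
     \<comment> \<open>matrix ordering: alpha* M_n(X)^+ alpha \<subseteq> M_m(X)^+ for alpha in M_{n,m}\<close>
     (\<forall>n m A \<alpha>. A \<in> P n \<longrightarrow> \<alpha> \<in> mats n m \<longrightarrow>
         rmult sm m n m (lmult sm m n n (cadj \<alpha>) A) \<alpha> \<in> P m) \<and>
     \<comment> \<open>e^n is an order unit of M_n(X)_sa\<close>
     (\<forall>n v. v \<in> msa st n \<longrightarrow> (\<exists>k>0. rsc sm k (ediag n e) - v \<in> P n)) \<and>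
     \<comment> \<open>e^n is Archimedean\<close>
     (\<forall>n v. v \<in> msa st n \<longrightarrow> (\<forall>k>0. rsc sm k (ediag n e) + v \<in> P n) \<longrightarrow> v \<in> P n)"

definition aorth :: "(nat \<Rightarrow> nat \<Rightarrow> ('a::ab_group_add) mtx \<Rightarrow> 'a mtx) \<Rightarrow> nat \<Rightarrow> 'a mtx \<Rightarrow> 'a mtx \<Rightarrow> bool" where
  "aorth absv n u v \<longleftrightarrow> absv n n (u - v) = u + v"

definition inf_orth :: "(complex \<Rightarrow> 'a \<Rightarrow> 'a) \<Rightarrow> ('a \<Rightarrow> 'a) \<Rightarrow> (nat \<Rightarrow> ('a::ab_group_add) mtx set)
    \<Rightarrow> 'a \<Rightarrow> nat \<Rightarrow> 'a mtx \<Rightarrow> 'a mtx \<Rightarrow> bool" where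
  "inf_orth sm st P e n u v \<longleftrightarrow>
     (\<forall>a b::real. mnorm sm st P e n (rsc sm a u + rsc sm b v) =
                  max (mnorm sm st P e n (rsc sm a u)) (mnorm sm st P e n (rsc sm b v)))"

definition abs_inf_orth :: "(complex \<Rightarrow> 'a \<Rightarrow> 'a) \<Rightarrow> ('a \<Rightarrow> 'a) \<Rightarrow> (nat \<Rightarrow> ('a::ab_group_add) mtx set)
    \<Rightarrow> 'a \<Rightarrow> nat \<Rightarrow> 'a mtx \<Rightarrow> 'a mtx \<Rightarrow> bool" where
  "abs_inf_orth sm st P e n u v \<longleftrightarrow>
     (\<forall>u1 v1. u1 \<in> P n \<longrightarrow> mle P n u1 u \<longrightarrow> v1 \<in> P n \<longrightarrow> mle P n v1 v \<longrightarrow>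
        inf_orth sm st P e n u1 v1)"

text \<open>(M_n(X)_sa, M_n(X)^+, |.|_{n,n}, e^n) is an absolute order unit space.\<close>
definition abs_ou_level ::
  "(complex \<Rightarrow> 'a \<Rightarrow> 'a) \<Rightarrow> ('a \<Rightarrow> 'a) \<Rightarrow> (nat \<Rightarrow> ('a::ab_group_add) mtx set)
    \<Rightarrow> (nat \<Rightarrow> nat \<Rightarrow> 'a mtx \<Rightarrow> 'a mtx) \<Rightarrow> 'a \<Rightarrow> nat \<Rightarrow> bool" where
  "abs_ou_level sm st P absv e n \<longleftrightarrow>
     (\<forall>v. v \<in> P n \<longrightarrow> absv n n v = v) \<and>
     (\<forall>v. v \<in> msa st n \<longrightarrow> absv n n v + v \<in> P n \<and> absv n n v - v \<in> P n) \<and>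
     (\<forall>v (k::real). v \<in> msa st n \<longrightarrow> absv n n (rsc sm k v) = rsc sm \<bar>k\<bar> (absv n n v)) \<and>
     (\<forall>u v w. u \<in> P n \<longrightarrow> v \<in> P n \<longrightarrow> w \<in> P n \<longrightarrow> aorth absv n u v \<longrightarrow> mle P n w v
        \<longrightarrow> aorth absv n u w) \<and>
     (\<forall>u v w. u \<in> P n \<longrightarrow> v \<in> P n \<longrightarrow> w \<in> P n \<longrightarrow> aorth absv n u v \<longrightarrow> aorth absv n u w
        \<longrightarrow> aorth absv n u (absv n n (v + w)) \<and> aorth absv n u (absv n n (v - w))) \<and>
     (\<forall>u v. u \<in> P n \<longrightarrow> v \<in> P n \<longrightarrow> (aorth absv n u v \<longleftrightarrow> abs_inf_orth sm st P e n u v))"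

definition absolute_matrix_order_unit_space ::
  "(complex \<Rightarrow> 'a \<Rightarrow> 'a) \<Rightarrow> ('a::ab_group_add \<Rightarrow> 'a) \<Rightarrow> (nat \<Rightarrow> 'a mtx set)
    \<Rightarrow> (nat \<Rightarrow> nat \<Rightarrow> 'a mtx \<Rightarrow> 'a mtx) \<Rightarrow> 'a \<Rightarrow> bool" where
  "absolute_matrix_order_unit_space sm st P absv e \<longleftrightarrow>
     matrix_order_unit_space sm st P e \<and>
     (\<forall>m n v. v \<in> mats m n \<longrightarrow> absv m n v \<in> P n) \<and>
     (\<forall>n. abs_ou_level sm st P absv e n) \<and>
     \<comment> \<open>|v \<oplus> w|_{m+r,n+s} = |v|_{m,n} \<oplus> |w|_{r,s}\<close>
     (\<forall>m n r s v w. v \<in> mats m n \<longrightarrow> w \<in> mats r s \<longrightarrow>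
        absv (m + r) (n + s) (dsum m n r s v w) = dsum n n s s (absv m n v) (absv r s w)) \<and>
     \<comment> \<open>|alpha v|_{r,n} \<le> ||alpha|| |v|_{m,n}\<close>
     (\<forall>r m n \<alpha> v. \<alpha> \<in> mats r m \<longrightarrow> v \<in> mats m n \<longrightarrow>
        mle P n (absv r n (lmult sm r m n \<alpha> v)) (rsc sm (cmat_norm r m \<alpha>) (absv m n v)))"

definition order_projections ::
  "(complex \<Rightarrow> 'a \<Rightarrow> 'a) \<Rightarrow> ('a \<Rightarrow> 'a) \<Rightarrow> (nat \<Rightarrow> nat \<Rightarrow> ('a::ab_group_add) mtx \<Rightarrow> 'a mtx)
    \<Rightarrow> 'a \<Rightarrow> nat \<Rightarrow> 'a mtx set" where
  "order_projections sm st absv e l =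
     {p \<in> msa st l. absv l l (rsc sm 2 p - ediag l e) = ediag l e}"

end

theory Submission
  imports Defs
begin

lemma sum_single_sm:
  assumes VS: "Vector_Spaces.vector_space sm" and a: "a < (n::nat)"
    and z: "\<And>t. t < n \<Longrightarrow> t \<noteq> a \<Longrightarrow> f t = 0"
  shows "(\<Sum>t<n. sm (f t) (X t)) = sm (f a) (X a)"
proof -
  interpret vector_space sm by (rule VS)
  have "(\<Sum>t<n. sm (f t) (X t)) = sm (f a) (X a) + (\<Sum>t\<in>{..<n} - {a}. sm (f t) (X t))"
    using a by (subst sum.remove[of _ a]) auto
  also have "(\<Sum>t\<in>{..<n} - {a}. sm (f t) (X t)) = 0"
    by (rule sum.neutral) (simp add: z)
  finally show ?thesis by simp
qed

lemma sum_two_sm: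
  assumes VS: "Vector_Spaces.vector_space sm" and a: "a < (n::nat)" and b: "b < n" and ab: "a \<noteq> b"
    and z: "\<And>t. t < n \<Longrightarrow> t \<noteq> a \<Longrightarrow> t \<noteq> b \<Longrightarrow> f t = 0"
  shows "(\<Sum>t<n. sm (f t) (X t)) = sm (f a) (X a) + sm (f b) (X b)"
proof -
  interpret vector_space sm by (rule VS)
  have "(\<Sum>t<n. sm (f t) (X t)) = sm (f a) (X a) + (\<Sum>t\<in>{..<n} - {a}. sm (f t) (X t))"
    using a by (subst sum.remove[of _ a]) auto
  also have "(\<Sum>t\<in>{..<n} - {a}. sm (f t) (X t)) = sm (f b) (X b) + (\<Sum>t\<in>{..<n} - {a} - {b}. sm (f t) (X t))"
    using b ab by (subst sum.remove[of _ b]) auto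
  also have "(\<Sum>t\<in>{..<n} - {a} - {b}. sm (f t) (X t)) = 0"
    by (rule sum.neutral) (simp add: z)
  finally show ?thesis by simp
qed

lemma comp_entry:
  "rmult sm m n m (lmult sm m n n (cadj \<alpha>) A) \<alpha> i j =
   (if i < m \<and> j < m then (\<Sum>k<n. sm (\<alpha> k j) (\<Sum>t<n. sm (cnj (\<alpha> t i)) (A t k))) else 0)"
  unfolding rmult_def lmult_def cadj_def by (auto intro!: sum.cong)

lemma comp_entry2:
  "rmult sm l n l (lmult sm l n n (cadj \<alpha>) A) \<alpha> i j =
   (if i < l \<and> j < l then (\<Sum>k<n. sm (\<alpha> k j) (\<Sum>t<n. sm (cnj (\<alpha> t i)) (A t k))) else 0)"
  by (rule comp_entry)


theorem proposition3p6:
  fixes sm :: "complex \<Rightarrow> 'a::ab_group_add \<Rightarrow> 'a"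
    and st :: "'a \<Rightarrow> 'a"
    and P :: "nat \<Rightarrow> 'a mtx set"
    and absv :: "nat \<Rightarrow> nat \<Rightarrow> 'a mtx \<Rightarrow> 'a mtx"
    and e :: 'a and l :: nat and p :: "'a mtx"
  assumes "absolute_matrix_order_unit_space sm st P absv e"
    and "p \<in> order_projections sm st absv e l"
    and "p \<noteq> 0"
  shows "mnorm sm st P e l p = 1"
proof -
  note AS = assms(1)[unfolded absolute_matrix_order_unit_space_def matrix_order_unit_space_def]
  have VS: "Vector_Spaces.vector_space sm" using AS by blast
  interpret V: vector_space sm by (rule VS)
  have st_add: "\<forall>x y. st (x + y) = st x + st y" using AS by (elim conjE) assumption
  have st_sm: "\<forall>c x. st (sm c x) = sm (cnj c) (st x)" using AS by (elim conjE) assumption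
  interpret S: additive st by standard (rule st_add[rule_format])
  have Psa': "\<forall>n. P n \<subseteq> msa st n" using AS by (elim conjE) assumption
  have Psa: "\<And>n. P n \<subseteq> msa st n" using Psa' by blast
  have P0': "\<forall>n. 0 \<in> P n" using AS by (elim conjE) assumption
  have P0: "\<And>n. 0 \<in> P n" using P0' by blast
  have Padd': "\<forall>n A B. A \<in> P n \<longrightarrow> B \<in> P n \<longrightarrow> A + B \<in> P n" using AS by (elim conjE) assumption
  note Padd = Padd'[rule_format]
  have Psc': "\<forall>n A (k::real). A \<in> P n \<longrightarrow> 0 \<le> k \<longrightarrow> rsc sm k A \<in> P n" using AS by (elim conjE) assumption
  note Psc = Psc'[rule_format]
  have Pcomp': "\<forall>n m A \<alpha>. A \<in> P n \<longrightarrow> \<alpha> \<in> mats n m \<longrightarrow>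
      rmult sm m n m (lmult sm m n n (cadj \<alpha>) A) \<alpha> \<in> P m" using AS by (elim conjE) assumption
  note Pcomp = Pcomp'[rule_format]
  have Punit': "\<forall>n v. v \<in> msa st n \<longrightarrow> (\<exists>k>0. rsc sm k (ediag n e) - v \<in> P n)" using AS by (elim conjE) assumption
  note Punit = Punit'[rule_format]
  have absP': "\<forall>m n v. v \<in> mats m n \<longrightarrow> absv m n v \<in> P n" using AS by (elim conjE) assumption
  note absP = absP'[rule_format]
  have dsabs': "\<forall>m n r s v w. v \<in> mats m n \<longrightarrow> w \<in> mats r s \<longrightarrow>
        absv (m + r) (n + s) (dsum m n r s v w) = dsum n n s s (absv m n v) (absv r s w)"
    using AS by (elim conjE) assumption
  note dsabs = dsabs'[rule_format]
  have levall: "\<forall>n. abs_ou_level sm st P absv e n" using AS by (elim conjE) assumption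
  have lev: "abs_ou_level sm st P absv e l" using levall by blast
  note lev' = lev[unfolded abs_ou_level_def]
  have abs_pos: "\<And>v. v \<in> P l \<Longrightarrow> absv l l v = v" using lev' by blast
  have abs_sa: "\<And>v. v \<in> msa st l \<Longrightarrow> absv l l v + v \<in> P l \<and> absv l l v - v \<in> P l" using lev' by blast
  have abs_hom: "\<And>v k. v \<in> msa st l \<Longrightarrow> absv l l (rsc sm k v) = rsc sm \<bar>k\<bar> (absv l l v)" using lev' by blast
  have orth_her: "\<And>u v w. u \<in> P l \<Longrightarrow> v \<in> P l \<Longrightarrow> w \<in> P l \<Longrightarrow> aorth absv l u v \<Longrightarrow> mle P l w v
        \<Longrightarrow> aorth absv l u w" using lev' by blast

  have two: "\<And>x. sm 2 x = x + x"
    by (metis one_add_one V.scale_left_distrib V.scale_one)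
  have rsc_rsc: "\<And>a b A. rsc sm a (rsc sm b A) = rsc sm (a * b) A"
    by (simp add: rsc_def fun_eq_iff)
  have rsc_one: "\<And>A. rsc sm 1 A = A"
    by (simp add: rsc_def fun_eq_iff)
  have rsc_zero: "\<And>a. rsc sm a 0 = 0"
    by (simp add: rsc_def fun_eq_iff)
  have mstar_sa: "\<And>A n. A \<in> msa st n \<Longrightarrow> mstar st A = A" by (simp add: msa_def)
  have msa_diff: "\<And>A B n. A \<in> msa st n \<Longrightarrow> B \<in> msa st n \<Longrightarrow> A - B \<in> msa st n"
    unfolding msa_def mats_def mstar_def by (auto simp: fun_eq_iff S.diff)
  have msa_rsc: "\<And>A c n. A \<in> msa st n \<Longrightarrow> rsc sm c A \<in> msa st n"
    unfolding msa_def mats_def mstar_def rsc_def by (auto simp: fun_eq_iff st_sm[rule_format])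
  have msa_mats: "\<And>A n. A \<in> msa st n \<Longrightarrow> A \<in> mats n n" by (simp add: msa_def)

  define E where "E = ediag l e"
  have E_sa: "E \<in> msa st l"
  proof -
    have "0 \<in> msa st l" using P0 Psa by blast
    then obtain k0 where k0: "k0 > 0" "rsc sm k0 (ediag l e) - 0 \<in> P l" using Punit by blast
    hence "rsc sm k0 E \<in> msa st l" using Psa E_def by auto
    hence "rsc sm (1/k0) (rsc sm k0 E) \<in> msa st l" by (rule msa_rsc)
    thus ?thesis using k0 by (simp add: rsc_rsc rsc_one)
  qed
  have p_sa: "p \<in> msa st l" and p_abs: "absv l l (rsc sm 2 p - E) = E"
    using assms(2) by (auto simp: order_projections_def E_def)
  have pst: "mstar st p = p" using p_sa mstar_sa by blast
  have v_sa: "rsc sm 2 p - E \<in> msa st l" using p_sa E_sa msa_rsc msa_diff by blast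
  have p_P: "p \<in> P l"
  proof -
    have "E + (rsc sm 2 p - E) \<in> P l" using abs_sa[OF v_sa] p_abs by simp
    hence "rsc sm 2 p \<in> P l" by simp
    hence "rsc sm (1/2) (rsc sm 2 p) \<in> P l" by (rule Psc) simp
    thus ?thesis by (simp add: rsc_rsc rsc_one)
  qed
  define q where "q = E - p"
  have q_P: "q \<in> P l"
  proof -
    have "E - (rsc sm 2 p - E) \<in> P l" using abs_sa[OF v_sa] p_abs by simp
    moreover have "E - (rsc sm 2 p - E) = rsc sm 2 q"
      by (simp add: q_def rsc_def fun_eq_iff two)
    ultimately have "rsc sm (1/2) (rsc sm 2 q) \<in> P l" using Psc by simp
    thus ?thesis by (simp add: rsc_rsc rsc_one)
  qed
  have p_mats: "p \<in> mats l l" using p_sa msa_mats by blast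
  have q_mats: "q \<in> mats l l" using q_P Psa msa_mats by blast
  have E_mats: "E \<in> mats l l" using E_sa msa_mats by blast
  have p0: "\<And>i j. \<not> (i < l \<and> j < l) \<Longrightarrow> p i j = 0" using p_mats by (auto simp: mats_def)
  have q0: "\<And>i j. \<not> (i < l \<and> j < l) \<Longrightarrow> q i j = 0" using q_mats by (auto simp: mats_def)
  have E0: "\<And>i j. \<not> (i < l \<and> j < l) \<Longrightarrow> E i j = 0" using E_mats by (auto simp: mats_def)

  define S where "S = {k::real. 0 < k \<and>
      block2 l (rsc sm k (ediag l e)) p (mstar st p) (rsc sm k (ediag l e)) \<in> P (2*l)}"
  have modl: "\<And>i. l \<le> i \<Longrightarrow> i < 2*l \<Longrightarrow> i mod l = i - l"
    by (metis le_mod_geq mod_less add_diff_inverse_nat less_diff_conv2 mult_2 not_less)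
  define \<alpha> :: "complex mtx" where "\<alpha> = (\<lambda>t i. if t < l \<and> (i = t \<or> i = t + l) then 1 else 0)"
  have \<alpha>_mats: "\<alpha> \<in> mats l (2*l)" by (auto simp: mats_def \<alpha>_def)
  define C where "C = rmult sm (2*l) l (2*l) (lmult sm (2*l) l l (cadj \<alpha>) p) \<alpha>"
  have C_P: "C \<in> P (2*l)" unfolding C_def by (rule Pcomp[OF p_P \<alpha>_mats])
  have \<alpha>_col: "\<And>t i. t < l \<Longrightarrow> i < 2*l \<Longrightarrow> \<alpha> t i = (if t = i mod l then 1 else 0)"
  proof -
    fix t i assume t: "t < l" and i: "i < 2*l"
    show "\<alpha> t i = (if t = i mod l then 1 else 0)"
    proof (cases "i < l")
      case True thus ?thesis using t by (auto simp: \<alpha>_def)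
    next
      case False thus ?thesis using t i modl[of i] by (auto simp: \<alpha>_def)
    qed
  qed
  have C_in: "\<And>i j. i < 2*l \<Longrightarrow> j < 2*l \<Longrightarrow> C i j = p (i mod l) (j mod l)"
  proof -
    fix i j assume i: "i < 2*l" and j: "j < 2*l"
    have lpos: "0 < l" using i by simp
    have inner: "\<And>k. (\<Sum>t<l. sm (cnj (\<alpha> t i)) (p t k)) = p (i mod l) k"
    proof -
      fix k
      have "(\<Sum>t<l. sm (cnj (\<alpha> t i)) (p t k)) = sm (cnj (\<alpha> (i mod l) i)) (p (i mod l) k)"
        by (rule sum_single_sm[OF VS]) (use lpos i \<alpha>_col in auto)
      also have "\<dots> = p (i mod l) k" using lpos i \<alpha>_col[of "i mod l" i] by simp
      finally show "(\<Sum>t<l. sm (cnj (\<alpha> t i)) (p t k)) = p (i mod l) k" .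
    qed
    have "C i j = (\<Sum>k<l. sm (\<alpha> k j) (p (i mod l) k))"
      using i j by (simp add: C_def comp_entry inner)
    also have "\<dots> = sm (\<alpha> (j mod l) j) (p (i mod l) (j mod l))"
      by (rule sum_single_sm[OF VS]) (use lpos j \<alpha>_col in auto)
    also have "\<dots> = p (i mod l) (j mod l)" using lpos j \<alpha>_col[of "j mod l" j] by simp
    finally show "C i j = p (i mod l) (j mod l)" .
  qed
  have C_out: "\<And>i j. \<not> (i < 2*l \<and> j < 2*l) \<Longrightarrow> C i j = 0"
    by (auto simp: C_def comp_entry)
  define D where "D = dsum l l l l q q"
  have D_P: "D \<in> P (2*l)"
  proof -
    have "dsum l l l l q q \<in> mats (l+l) (l+l)" by (auto simp: mats_def dsum_def q0)
    hence "absv (l+l) (l+l) (dsum l l l l q q) \<in> P (l+l)" by (rule absP)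
    moreover have "absv (l+l) (l+l) (dsum l l l l q q) = D"
      using dsabs[OF q_mats q_mats] abs_pos[OF q_P] by (simp add: D_def)
    ultimately show ?thesis by (simp add: mult_2)
  qed
  have one_S: "1 \<in> S"
  proof -
    have "block2 l (rsc sm 1 (ediag l e)) p (mstar st p) (rsc sm 1 (ediag l e)) = C + D"
    proof (rule ext, rule ext)
      fix i j
      show "block2 l (rsc sm 1 (ediag l e)) p (mstar st p) (rsc sm 1 (ediag l e)) i j = (C + D) i j"
      proof (cases "i < 2*l \<and> j < 2*l")
        case True
        then show ?thesis
          using modl[of i] modl[of j]
          by (auto simp: rsc_one pst block2_def C_in D_def dsum_def q_def E_def[symmetric] p0 q0)
      next
        case False
        then show ?thesis by (auto simp: C_out D_def dsum_def block2_def)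
      qed
    qed
    thus ?thesis using Padd[OF C_P D_P] by (simp add: S_def)
  qed
  define \<beta> :: "complex mtx" where
    "\<beta> = (\<lambda>t i. if i < l \<and> t = i then 1 else if i < l \<and> t = i + l then -1 else 0)"
  have \<beta>_mats: "\<beta> \<in> mats (2*l) l" by (auto simp: mats_def \<beta>_def)
  have lb: "1 \<le> k" if kS: "k \<in> S" for k
  proof (rule ccontr)
    assume "\<not> 1 \<le> k"
    hence k1: "k < 1" by simp
    have k0: "0 < k" and MP: "block2 l (rsc sm k E) p p (rsc sm k E) \<in> P (2*l)"
      using kS by (auto simp: S_def pst E_def)
    define M where "M = block2 l (rsc sm k E) p p (rsc sm k E)"
    define R where "R = rmult sm l (2*l) l (lmult sm l (2*l) (2*l) (cadj \<beta>) M) \<beta>"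
    have R_P: "R \<in> P l" unfolding R_def using Pcomp[OF MP[folded M_def] \<beta>_mats] .
    have R_eq: "R = rsc sm 2 (rsc sm k E - p)"
    proof (rule ext, rule ext)
      fix i j
      show "R i j = rsc sm 2 (rsc sm k E - p) i j"
      proof (cases "i < l \<and> j < l")
        case False
        then show ?thesis by (auto simp: R_def comp_entry rsc_def E0 p0)
      next
        case True
        hence i: "i < l" and j: "j < l" by auto
        have inner: "\<And>c. (\<Sum>t<2*l. sm (cnj (\<beta> t i)) (M t c)) = M i c - M (i+l) c"
        proof -
          fix c
          have "(\<Sum>t<2*l. sm (cnj (\<beta> t i)) (M t c)) =
              sm (cnj (\<beta> i i)) (M i c) + sm (cnj (\<beta> (i+l) i)) (M (i+l) c)"
            by (rule sum_two_sm[OF VS]) (use i in \<open>auto simp: \<beta>_def\<close>)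
          also have "\<dots> = M i c - M (i+l) c" using i by (simp add: \<beta>_def)
          finally show "(\<Sum>t<2*l. sm (cnj (\<beta> t i)) (M t c)) = M i c - M (i+l) c" .
        qed
        have "R i j = (\<Sum>c<2*l. sm (\<beta> c j) (M i c - M (i+l) c))"
          using i j by (simp add: R_def comp_entry inner)
        also have "\<dots> = sm (\<beta> j j) (M i j - M (i+l) j) + sm (\<beta> (j+l) j) (M i (j+l) - M (i+l) (j+l))"
          by (rule sum_two_sm[OF VS]) (use j in \<open>auto simp: \<beta>_def\<close>)
        also have "\<dots> = (sm k (E i j) - p i j) + (sm k (E i j) - p i j)"
          using i j by (simp add: \<beta>_def M_def block2_def rsc_def)
        also have "\<dots> = rsc sm 2 (rsc sm k E - p) i j"
          by (simp add: rsc_def two)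
        finally show ?thesis .
      qed
    qed
    have kEp: "rsc sm k E - p \<in> P l"
    proof -
      have "rsc sm (1/2) R \<in> P l" using Psc[OF R_P] by simp
      thus ?thesis by (simp add: R_eq rsc_rsc rsc_one)
    qed
    define w where "w = rsc sm (1 - k) p"
    have w_P: "w \<in> P l" unfolding w_def using Psc[OF p_P] k1 by simp
    have sm1k: "\<And>x. sm (complex_of_real (1 - k)) x = x - sm (complex_of_real k) x"
      by (simp add: V.scale_left_diff_distrib)
    have mle_wq: "mle P l w q"
    proof -
      have "q - w = (rsc sm k E - p) + rsc sm (1 - k) q"
        by (simp add: fun_eq_iff w_def q_def rsc_def sm1k V.scale_right_diff_distrib V.scale_left_diff_distrib)
      thus ?thesis using Padd[OF kEp Psc[OF q_P]] k1 by (simp add: mle_def)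
    qed
    have orth_pq: "aorth absv l p q"
    proof -
      have "p - q = rsc sm 2 p - E" by (simp add: fun_eq_iff q_def rsc_def two)
      moreover have "p + q = E" by (simp add: q_def)
      ultimately show ?thesis using p_abs by (simp add: aorth_def)
    qed
    have "aorth absv l p w" by (rule orth_her[OF p_P q_P w_P orth_pq mle_wq])
    hence eq: "absv l l (p - w) = p + w" by (simp add: aorth_def)
    have "p - w = rsc sm k p" by (simp add: fun_eq_iff w_def rsc_def sm1k V.scale_left_diff_distrib)
    hence "absv l l (p - w) = rsc sm k p"
      using abs_hom[OF p_sa, of k] abs_pos[OF p_P] k0 by simp
    hence eq2: "rsc sm k p = p + w" using eq by simp
    have "p = 0"
    proof (rule ext, rule ext)
      fix i j
      have h: "sm (complex_of_real k) (p i j) = p i j + (p i j - sm (complex_of_real k) (p i j))"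
        using fun_cong[OF fun_cong[OF eq2, of i], of j] by (simp add: w_def rsc_def sm1k V.scale_left_diff_distrib)
      have "sm (complex_of_real (2 - 2*k)) (p i j) = (p i j + p i j) - (sm (complex_of_real k) (p i j) + sm (complex_of_real k) (p i j))"
        by (simp add: V.scale_left_diff_distrib two[symmetric])
      also have "\<dots> = 0" using h by (simp add: algebra_simps)
      finally have "sm (complex_of_real (2 - 2*k)) (p i j) = 0" .
      moreover have "complex_of_real (2 - 2*k) \<noteq> 0" using k1 by simp
      ultimately show "p i j = 0 i j" by simp
    qed
    thus False using assms(3) by simp
  qed
  show ?thesis unfolding mnorm_def S_def[symmetric]
    by (rule cInf_eq_minimum[OF one_S lb])
qed

end
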